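(* Let $F$ be a field and let $v$ be a place of $F(T)$ which is trivial on $F$ and whose residue field is separable over $F$. Then the maps $\mathcal D_j$ on $F(T)$ extend continuously to the completion of $F(T)$ at $v$, and there they form a higher $K$-derivation for any coefficient field $K$ of the completion such that $K$ contains $F$.
   Context: For $j\ge0$, $\mathcal D_j$ is the $j$th hyperdifferential operator: the $F$-linear map on $F[T]$ with $\mathcal D_j(T^m)=\binom{m}{j}T^{m-j}$ for $m\ge0$. The sequence $(\mathcal D_j)$ is a higher $F$-derivation on $F[T]$ and extends uniquely to a higher $F$-derivation on the field $F(T)$; these extended maps are the $\mathcal D_j$ on $F(T)$. Here, for a commutative ring $R$ and $R$-algebra $A$, a higher $R$-derivation on $A$ is a sequence of $R$-linear maps $d_j:A\to A$ with $d_0=\mathrm{id}$ and $d_j(ab)=\sum_{k=0}^jd_k(a)d_{j-k}(b)$. A coefficient field of a complete discretely valued field is a subfield of its valuation ring mapping isomorphically onto the residue field. *)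

theory Defs
  imports "HOL-Computational_Algebra.Polynomial" "HOL-Computational_Algebra.Fraction_Field"
          "HOL-Computational_Algebra.Polynomial_Factorial"
begin

text \<open>The rational function field F(T) is modelled as the type 'a poly fract.\<close>

definition rf_of_poly :: "'a::field poly \<Rightarrow> 'a poly fract" where
  "rf_of_poly p = Fract p 1"

definition rf_const :: "'a::field \<Rightarrow> 'a poly fract" where
  "rf_const c = rf_of_poly [:c:]"

definition hasse_poly :: "nat \<Rightarrow> 'a::field poly \<Rightarrow> 'a poly" where
  "hasse_poly j p = (\<Sum>m\<le>degree p. monom (of_nat (m choose j) * coeff p m) (m - j))"

text \<open>Higher R-derivation on a field B, where the base ring R is given by its image in B
  (a set of elements of B); R-linearity means additivity and homogeneity w.r.t. R.\<close>

definition higher_derivation :: "'b::field set \<Rightarrow> (nat \<Rightarrow> 'b \<Rightarrow> 'b) \<Rightarrow> bool" where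
  "higher_derivation R d \<longleftrightarrow>
     d 0 = id \<and>
     (\<forall>j x y. d j (x + y) = d j x + d j y) \<and>
     (\<forall>j r x. r \<in> R \<longrightarrow> d j (r * x) = r * d j x) \<and>
     (\<forall>j a b. d j (a * b) = (\<Sum>k\<le>j. d k a * d (j - k) b))"

definition hasse_rf :: "nat \<Rightarrow> 'a::field poly fract \<Rightarrow> 'a poly fract" where
  "hasse_rf = (THE d. higher_derivation (range rf_const) d \<and>
                      (\<forall>j p. d j (rf_of_poly p) = rf_of_poly (hasse_poly j p)))"

text \<open>Normalized discrete valuations (the value at 0 is irrelevant; 0 has value infinity).\<close>

definition discrete_valuation :: "('b::field \<Rightarrow> int) \<Rightarrow> bool" where
  "discrete_valuation v \<longleftrightarrow>
     (\<forall>x y. x \<noteq> 0 \<longrightarrow> y \<noteq> 0 \<longrightarrow> v (x * y) = v x + v y) \<and>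
     (\<forall>x y. x \<noteq> 0 \<longrightarrow> y \<noteq> 0 \<longrightarrow> x + y \<noteq> 0 \<longrightarrow> min (v x) (v y) \<le> v (x + y)) \<and>
     (\<exists>x. x \<noteq> 0 \<and> v x = 1)"

definition in_valring :: "('b::field \<Rightarrow> int) \<Rightarrow> 'b \<Rightarrow> bool" where
  "in_valring v x \<longleftrightarrow> x = 0 \<or> 0 \<le> v x"

definition in_maxideal :: "('b::field \<Rightarrow> int) \<Rightarrow> 'b \<Rightarrow> bool" where
  "in_maxideal v x \<longleftrightarrow> x = 0 \<or> 0 < v x"

definition vclose :: "('b::field \<Rightarrow> int) \<Rightarrow> int \<Rightarrow> 'b \<Rightarrow> 'b \<Rightarrow> bool" where
  "vclose v N x y \<longleftrightarrow> x = y \<or> N \<le> v (x - y)"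

definition vcauchy :: "('b::field \<Rightarrow> int) \<Rightarrow> (nat \<Rightarrow> 'b) \<Rightarrow> bool" where
  "vcauchy v s \<longleftrightarrow> (\<forall>N. \<exists>M. \<forall>m n. M \<le> m \<longrightarrow> M \<le> n \<longrightarrow> vclose v N (s m) (s n))"

definition vconverges :: "('b::field \<Rightarrow> int) \<Rightarrow> (nat \<Rightarrow> 'b) \<Rightarrow> 'b \<Rightarrow> bool" where
  "vconverges v s l \<longleftrightarrow> (\<forall>N. \<exists>M. \<forall>n. M \<le> n \<longrightarrow> vclose v N (s n) l)"

definition vcomplete :: "('b::field \<Rightarrow> int) \<Rightarrow> bool" where
  "vcomplete v \<longleftrightarrow> (\<forall>s. vcauchy v s \<longrightarrow> (\<exists>l. vconverges v s l))"

definition vcontinuous :: "('b::field \<Rightarrow> int) \<Rightarrow> ('b \<Rightarrow> 'b) \<Rightarrow> bool" where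
  "vcontinuous v f \<longleftrightarrow>
     (\<forall>x N. \<exists>M. \<forall>y. vclose v M y x \<longrightarrow> vclose v N (f y) (f x))"

definition field_hom :: "('a::field \<Rightarrow> 'b::field) \<Rightarrow> bool" where
  "field_hom \<iota> \<longleftrightarrow> \<iota> 1 = 1 \<and> (\<forall>x y. \<iota> (x + y) = \<iota> x + \<iota> y) \<and> (\<forall>x y. \<iota> (x * y) = \<iota> x * \<iota> y)"

definition is_completion ::
    "('a::field \<Rightarrow> int) \<Rightarrow> ('b::field \<Rightarrow> int) \<Rightarrow> ('a \<Rightarrow> 'b) \<Rightarrow> bool" where
  "is_completion v w \<iota> \<longleftrightarrow>
     discrete_valuation w \<and> vcomplete w \<and> field_hom \<iota> \<and>
     (\<forall>x. x \<noteq> 0 \<longrightarrow> w (\<iota> x) = v x) \<and>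
     (\<forall>y N. \<exists>x. vclose w N y (\<iota> x))"

definition subfield :: "'b::field set \<Rightarrow> bool" where
  "subfield K \<longleftrightarrow> 0 \<in> K \<and> 1 \<in> K \<and>
     (\<forall>x\<in>K. \<forall>y\<in>K. x + y \<in> K \<and> x * y \<in> K) \<and>
     (\<forall>x\<in>K. - x \<in> K) \<and> (\<forall>x\<in>K. x \<noteq> 0 \<longrightarrow> inverse x \<in> K)"

text \<open>Coefficient field: a subfield of the valuation ring mapping isomorphically
  (bijectively, the map being a ring map) onto the residue field O/m.\<close>

definition coefficient_field :: "('b::field \<Rightarrow> int) \<Rightarrow> 'b set \<Rightarrow> bool" where
  "coefficient_field w K \<longleftrightarrow>
     subfield K \<and> (\<forall>x\<in>K. in_valring w x) \<and>
     (\<forall>a\<in>K. \<forall>b\<in>K. in_maxideal w (a - b) \<longrightarrow> a = b) \<and>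
     (\<forall>x. in_valring w x \<longrightarrow> (\<exists>a\<in>K. in_maxideal w (x - a)))"

definition separable_poly :: "'a::field poly \<Rightarrow> bool" where
  "separable_poly f \<longleftrightarrow> coprime f (pderiv f)"

text \<open>Residue field of v separable over F: every residue class is a root of a
  separable polynomial over F (which is nonzero, being coprime to its derivative).\<close>

definition residue_separable :: "('a::field poly fract \<Rightarrow> int) \<Rightarrow> bool" where
  "residue_separable v \<longleftrightarrow>
     (\<forall>x. in_valring v x \<longrightarrow>
        (\<exists>f. separable_poly f \<and> in_maxideal v (poly (map_poly rf_const f) x)))"

definition place_trivial_on_F :: "('a::field poly fract \<Rightarrow> int) \<Rightarrow> bool" where
  "place_trivial_on_F v \<longleftrightarrow> discrete_valuation v \<and> (\<forall>c. c \<noteq> 0 \<longrightarrow> v (rf_const c) = 0)"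

end

theory Submission
  imports Defs "HOL-Computational_Algebra.Formal_Power_Series"
begin

unbundle fps_syntax

lemma coeff_hasse_poly:
  "coeff (hasse_poly j p) i = of_nat ((i + j) choose j) * coeff p (i + j)"
proof -
  have "coeff (hasse_poly j p) i =
     (\<Sum>m\<le>degree p. if m - j = i then of_nat (m choose j) * coeff p m else 0)"
    by (simp add: hasse_poly_def coeff_sum coeff_monom)
  also have "\<dots> = (\<Sum>m\<le>degree p. if m = i + j then of_nat (m choose j) * coeff p m else 0)"
    by (rule sum.cong) (auto simp: binomial_eq_0)
  also have "\<dots> = (if i + j \<le> degree p then of_nat ((i+j) choose j) * coeff p (i+j) else 0)"
    by (simp add: sum.delta)
  also have "\<dots> = of_nat ((i + j) choose j) * coeff p (i + j)"
    by (auto simp: coeff_eq_0)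
  finally show ?thesis .
qed

lemma hasse_add: "hasse_poly j (p + q) = hasse_poly j p + hasse_poly j q"
  by (simp add: poly_eq_iff coeff_hasse_poly algebra_simps)

lemma hasse_diff: "hasse_poly j (p - q) = hasse_poly j p - hasse_poly j q"
  by (simp add: poly_eq_iff coeff_hasse_poly algebra_simps)

lemma hasse_smult: "hasse_poly j (smult c p) = smult c (hasse_poly j p)"
  by (simp add: poly_eq_iff coeff_hasse_poly algebra_simps)

lemma hasse_sum: "hasse_poly j (sum f A) = (\<Sum>x\<in>A. hasse_poly j (f x))"
  by (simp add: poly_eq_iff coeff_hasse_poly coeff_sum sum_distrib_left)

lemma hasse_0: "hasse_poly 0 p = p"
  by (simp add: poly_eq_iff coeff_hasse_poly)

lemma hasse_zero [simp]: "hasse_poly j 0 = 0"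
  by (simp add: poly_eq_iff coeff_hasse_poly)

lemma hasse_const: "j > 0 \<Longrightarrow> hasse_poly j [:c:] = 0"
  by (simp add: poly_eq_iff coeff_hasse_poly coeff_pCons split: nat.splits)

lemma hasse_one: "hasse_poly j 1 = (if j = 0 then 1 else 0)"
  using hasse_const[of j 1] by (auto simp: hasse_0 one_pCons)

lemma hasse_monom: "hasse_poly j (monom a m) = monom (of_nat (m choose j) * a) (m - j)"
  by (auto simp: poly_eq_iff coeff_hasse_poly coeff_monom binomial_eq_0)

lemma degree_hasse: "degree (hasse_poly j p) \<le> degree p"
  by (rule degree_le) (simp add: coeff_hasse_poly coeff_eq_0)

lemma hasse_leibniz_monom:
  "hasse_poly j (monom a m * monom b n) =
     (\<Sum>k\<le>j. hasse_poly k (monom a m) * hasse_poly (j - k) (monom b n))"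
proof -
  have "(\<Sum>k\<le>j. hasse_poly k (monom a m) * hasse_poly (j - k) (monom b n)) =
        (\<Sum>k\<le>j. monom (of_nat ((m choose k) * (n choose (j - k))) * (a * b)) (m + n - j))"
  proof (rule sum.cong[OF refl])
    fix k assume k: "k \<in> {..j}"
    show "hasse_poly k (monom a m) * hasse_poly (j - k) (monom b n) =
          monom (of_nat ((m choose k) * (n choose (j - k))) * (a * b)) (m + n - j)"
    proof (cases "k \<le> m \<and> j - k \<le> n")
      case True
      then have e: "m - k + (n - (j - k)) = m + n - j" using k by auto
      show ?thesis by (simp add: hasse_monom mult_monom e algebra_simps)
    next
      case False
      then have "(m choose k) * (n choose (j - k)) = 0" by (auto simp: binomial_eq_0)
      then show ?thesis using False by (auto simp: hasse_monom mult_monom binomial_eq_0)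
    qed
  qed
  also have "\<dots> = monom (of_nat ((m + n) choose j) * (a * b)) (m + n - j)"
    by (simp add: monom_sum[symmetric] sum_distrib_right[symmetric] of_nat_sum[symmetric] vandermonde
         del: of_nat_mult)
  also have "\<dots> = hasse_poly j (monom a m * monom b n)"
    by (simp add: mult_monom hasse_monom)
  finally show ?thesis by simp
qed

lemma hasse_leibniz:
  "hasse_poly j (p * q) = (\<Sum>k\<le>j. hasse_poly k p * hasse_poly (j - k) q)"
proof -
  define P where "P = (\<lambda>i. monom (coeff p i) i)"
  define Q where "Q = (\<lambda>i. monom (coeff q i) i)"
  define dp where "dp = degree p"
  define dq where "dq = degree q"
  have p: "p = (\<Sum>i\<le>dp. P i)" and q: "q = (\<Sum>i\<le>dq. Q i)"
    by (simp_all add: P_def Q_def dp_def dq_def poly_as_sum_of_monoms)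
  have "(\<Sum>k\<le>j. hasse_poly k p * hasse_poly (j - k) q) =
     (\<Sum>k\<le>j. hasse_poly k (\<Sum>i\<le>dp. P i) * hasse_poly (j - k) (\<Sum>l\<le>dq. Q l))"
    using p q by simp
  also have "\<dots> = (\<Sum>k\<le>j. \<Sum>i\<le>dp. \<Sum>l\<le>dq. hasse_poly k (P i) * hasse_poly (j - k) (Q l))"
    by (simp only: hasse_sum sum_product)
  also have "\<dots> = (\<Sum>i\<le>dp. \<Sum>k\<le>j. \<Sum>l\<le>dq. hasse_poly k (P i) * hasse_poly (j - k) (Q l))"
    by (rule sum.swap)
  also have "\<dots> = (\<Sum>i\<le>dp. \<Sum>l\<le>dq. \<Sum>k\<le>j. hasse_poly k (P i) * hasse_poly (j - k) (Q l))"
    by (rule sum.cong[OF refl], rule sum.swap)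
  also have "\<dots> = (\<Sum>i\<le>dp. \<Sum>l\<le>dq. hasse_poly j (P i * Q l))"
    by (simp add: P_def Q_def hasse_leibniz_monom)
  also have "\<dots> = hasse_poly j ((\<Sum>i\<le>dp. P i) * (\<Sum>l\<le>dq. Q l))"
    by (simp only: hasse_sum sum_product)
  also have "\<dots> = hasse_poly j (p * q)"
    using p q by simp
  finally show ?thesis by simp
qed

declare hasse_0[simp]

lemma rf_add: "rf_of_poly (p + q) = rf_of_poly p + rf_of_poly q"
  by (simp add: rf_of_poly_def)
lemma rf_mult: "rf_of_poly (p * q) = rf_of_poly p * rf_of_poly q"
  by (simp add: rf_of_poly_def)
lemma rf_0 [simp]: "rf_of_poly 0 = 0" by (simp add: rf_of_poly_def fract_collapse)
lemma rf_1 [simp]: "rf_of_poly 1 = 1" by (simp add: rf_of_poly_def fract_collapse)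
lemma rf_eq_0_iff [simp]: "rf_of_poly p = 0 \<longleftrightarrow> p = 0"
  by (simp add: rf_of_poly_def Zero_fract_def eq_fract)
lemma rf_uminus: "rf_of_poly (-p) = - rf_of_poly p" by (simp add: rf_of_poly_def)
lemma rf_diff: "rf_of_poly (p - q) = rf_of_poly p - rf_of_poly q" by (simp add: rf_of_poly_def)
lemma rf_sum: "rf_of_poly (sum f A) = (\<Sum>x\<in>A. rf_of_poly (f x))"
  by (induction A rule: infinite_finite_induct) (auto simp: rf_add)
lemma rf_power: "rf_of_poly (p ^ n) = rf_of_poly p ^ n"
  by (induction n) (auto simp: rf_mult)
lemma rf_Fract: "q \<noteq> 0 \<Longrightarrow> rf_of_poly q * Fract p q = rf_of_poly p"
  by (simp add: rf_of_poly_def eq_fract)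

lemma rf_const_add: "rf_const (a + b) = rf_const a + rf_const b"
  by (simp add: rf_const_def rf_add[symmetric])
lemma rf_const_mult: "rf_const (a * b) = rf_const a * rf_const b"
  by (simp add: rf_const_def rf_mult[symmetric] mult.commute)
lemma rf_const_0 [simp]: "rf_const 0 = 0" by (simp add: rf_const_def)
lemma rf_const_1 [simp]: "rf_const 1 = 1" by (simp add: rf_const_def one_pCons[symmetric])
lemma rf_const_eq_0_iff [simp]: "rf_const c = 0 \<longleftrightarrow> c = 0" by (simp add: rf_const_def)

definition Th :: "'a::field poly \<Rightarrow> 'a poly fract fps" where
  "Th p = Abs_fps (\<lambda>j. rf_of_poly (hasse_poly j p))"

lemma Th_nth [simp]: "Th p $ j = rf_of_poly (hasse_poly j p)" by (simp add: Th_def)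
lemma Th_mult: "Th (p * q) = Th p * Th q"
  by (rule fps_ext) (simp add: fps_mult_nth hasse_leibniz rf_sum rf_mult atLeast0AtMost)
lemma Th_add: "Th (p + q) = Th p + Th q" by (rule fps_ext) (simp add: hasse_add rf_add)
lemma Th_1: "Th 1 = 1" by (rule fps_ext) (simp add: hasse_one)
lemma Th_0th: "Th p $ 0 = rf_of_poly p" by (simp add: hasse_0)
lemma Th_nz: "q \<noteq> 0 \<Longrightarrow> Th q \<noteq> 0"
  by (metis Th_0th fps_zero_nth rf_eq_0_iff)
lemma Th_const: "Th [:c:] = fps_const (rf_const c)"
  by (rule fps_ext) (auto simp add: hasse_const hasse_0 rf_const_def)

definition thf :: "'a::field poly fract \<Rightarrow> 'a poly fract fps" where
  "thf x = (let r = (SOME r. snd r \<noteq> 0 \<and> x = Fract (fst r) (snd r))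
            in Th (fst r) * inverse (Th (snd r)))"

lemma thf_char:
  assumes "q \<noteq> 0" shows "Th q * thf (Fract p q) = Th p"
proof -
  define r0 where "r0 = (SOME r. snd r \<noteq> 0 \<and> Fract p q = Fract (fst r) (snd r))"
  have "\<exists>r. snd r \<noteq> 0 \<and> Fract p q = Fract (fst r) (snd r)"
    using assms by (intro exI[of _ "(p,q)"]) auto
  then have r0: "snd r0 \<noteq> 0 \<and> Fract p q = Fract (fst r0) (snd r0)"
    unfolding r0_def by (rule someI_ex)
  define p' where "p' = fst r0"
  define q' where "q' = snd r0"
  have r: "q' \<noteq> 0" "Fract p q = Fract p' q'" using r0 by (auto simp: p'_def q'_def)
  have th: "thf (Fract p q) = Th p' * inverse (Th q')"
    by (simp add: thf_def r0_def[symmetric] p'_def q'_def Let_def)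
  have eq: "p * q' = p' * q" using r assms by (simp add: eq_fract)
  have inv: "Th q' * inverse (Th q') = 1" by (rule inverse_mult_eq_1') (simp add: Th_0th r)
  have "Th q' * (Th q * thf (Fract p q)) = Th q * Th p' * (Th q' * inverse (Th q'))"
    by (simp add: th algebra_simps)
  also have "\<dots> = Th (p' * q)" using inv by (simp add: Th_mult mult.commute)
  also have "\<dots> = Th q' * Th p" by (simp add: eq[symmetric] Th_mult mult.commute)
  finally show ?thesis using Th_nz[OF r(1)] by simp
qed

lemma thf_unique: "q \<noteq> 0 \<Longrightarrow> Th q * \<phi> = Th p \<Longrightarrow> thf (Fract p q) = \<phi>"
  using thf_char[of q p] Th_nz[of q] by (metis mult_left_cancel)

lemma thf_rf: "thf (rf_of_poly p) = Th p"
  unfolding rf_of_poly_def by (rule thf_unique) (simp_all add: Th_1)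

lemma thf_mult: "thf (x * y) = thf x * thf y"
proof -
  obtain p q where x: "x = Fract p q" "q \<noteq> 0" by (cases x)
  obtain r s where y: "y = Fract r s" "s \<noteq> 0" by (cases y)
  have "Th (q * s) * (thf x * thf y) = (Th q * thf x) * (Th s * thf y)"
    by (simp add: Th_mult algebra_simps)
  also have "\<dots> = Th (p * r)" using x y by (simp add: thf_char Th_mult)
  finally have "thf (Fract (p*r) (q*s)) = thf x * thf y" using x y by (intro thf_unique) auto
  then show ?thesis using x y by simp
qed

lemma thf_add: "thf (x + y) = thf x + thf y"
proof -
  obtain p q where x: "x = Fract p q" "q \<noteq> 0" by (cases x)
  obtain r s where y: "y = Fract r s" "s \<noteq> 0" by (cases y)
  have "Th (q * s) * (thf x + thf y) = Th s * (Th q * thf x) + Th q * (Th s * thf y)"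
    by (simp add: Th_mult algebra_simps)
  also have "\<dots> = Th (p * s + r * q)" using x y by (simp add: thf_char Th_mult Th_add algebra_simps)
  finally have "thf (Fract (p * s + r * q) (q*s)) = thf x + thf y" using x y by (intro thf_unique) auto
  then show ?thesis using x y by simp
qed

definition hd :: "nat \<Rightarrow> 'a::field poly fract \<Rightarrow> 'a poly fract" where
  "hd j x = thf x $ j"

lemma thf_0th: "thf x $ 0 = x"
proof -
  obtain p q where x: "x = Fract p q" "q \<noteq> 0" by (cases x)
  have "(Th q * thf x) $ 0 = Th p $ 0" using x thf_char by metis
  then have "rf_of_poly q * (thf x $ 0) = rf_of_poly q * x"
    using rf_Fract[of q p] x by (simp add: Th_0th)
  then show ?thesis using x by simp
qed

lemma hd_higher: "higher_derivation (range rf_const) hd"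
  unfolding higher_derivation_def
proof (intro conjI allI impI)
  show "hd 0 = id" by (rule ext) (simp add: hd_def thf_0th)
next
  fix j x y show "hd j (x + y) = hd j x + hd j y" by (simp add: hd_def thf_add)
next
  fix j r x assume "r \<in> range rf_const"
  then obtain c where r: "r = rf_const c" by auto
  have "thf r = fps_const r" unfolding r rf_const_def[of c] thf_rf Th_const rf_const_def ..
  then show "hd j (r * x) = r * hd j x" by (simp add: hd_def thf_mult)
next
  fix j a b show "hd j (a * b) = (\<Sum>k\<le>j. hd k a * hd (j - k) b)"
    by (simp add: hd_def thf_mult fps_mult_nth atLeast0AtMost)
qed

lemma hd_rf: "hd j (rf_of_poly p) = rf_of_poly (hasse_poly j p)"
  by (simp add: hd_def thf_rf)

lemma hasse_rf_eq: "hasse_rf = hd"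
  unfolding hasse_rf_def
proof (rule the_equality)
  show "higher_derivation (range rf_const) hd \<and> (\<forall>j p. hd j (rf_of_poly p) = rf_of_poly (hasse_poly j p))"
    using hd_higher hd_rf by blast
next
  fix d :: "nat \<Rightarrow> 'a poly fract \<Rightarrow> 'a poly fract"
  assume d: "higher_derivation (range rf_const) d \<and> (\<forall>j p. d j (rf_of_poly p) = rf_of_poly (hasse_poly j p))"
  define G where "G x = Abs_fps (\<lambda>j. d j x)" for x
  have Gm: "G (x*y) = G x * G y" for x y
    using d by (intro fps_ext) (simp add: G_def fps_mult_nth higher_derivation_def atLeast0AtMost)
  have Gr: "G (rf_of_poly p) = Th p" for p using d by (intro fps_ext) (simp add: G_def)
  have G: "G x = thf x" for x
  proof -
    obtain p q where x: "x = Fract p q" "q \<noteq> 0" by (cases x)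
    have "Th q * G x = Th p" using Gm[of "rf_of_poly q" x] Gr rf_Fract x by metis
    then show ?thesis using x thf_unique by metis
  qed
  show "d = hd"
  proof (intro ext)
    fix j x show "d j x = hd j x" using G[of x] unfolding hd_def G_def by (metis fps_nth_Abs_fps)
  qed
qed

definition vge :: "('b::field \<Rightarrow> int) \<Rightarrow> int \<Rightarrow> 'b \<Rightarrow> bool" where
  "vge v n x \<longleftrightarrow> x = 0 \<or> n \<le> v x"

lemma vge_0 [simp]: "vge v n 0" by (simp add: vge_def)
lemma vge_nz: "x \<noteq> 0 \<Longrightarrow> vge v n x \<longleftrightarrow> n \<le> v x" by (simp add: vge_def)
lemma vge_self: "vge v (v x) x" by (simp add: vge_def)
lemma vge_mono: "vge v n x \<Longrightarrow> m \<le> n \<Longrightarrow> vge v m x" by (auto simp: vge_def)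
lemma vclose_iff: "vclose v N x y \<longleftrightarrow> vge v N (x - y)" by (simp add: vclose_def vge_def)
lemma in_valring_iff: "in_valring v x \<longleftrightarrow> vge v 0 x" by (simp add: in_valring_def vge_def)
lemma in_maxideal_iff: "in_maxideal v x \<longleftrightarrow> vge v 1 x" by (auto simp: in_maxideal_def vge_def)

context
  fixes v :: "'b::field \<Rightarrow> int"
  assumes dv: "discrete_valuation v"
begin

lemma v_mult: "x \<noteq> 0 \<Longrightarrow> y \<noteq> 0 \<Longrightarrow> v (x * y) = v x + v y"
  using dv by (simp add: discrete_valuation_def)

lemma v_add: "x \<noteq> 0 \<Longrightarrow> y \<noteq> 0 \<Longrightarrow> x + y \<noteq> 0 \<Longrightarrow> min (v x) (v y) \<le> v (x + y)"
  using dv by (simp add: discrete_valuation_def)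

lemma v_1 [simp]: "v 1 = 0"
  using v_mult[of 1 1] by simp

lemma v_m1: "v (-1) = 0"
  using v_mult[of "-1" "-1"] by simp

lemma v_uminus [simp]: "v (- x) = v x"
proof (cases "x = 0")
  case False
  then show ?thesis using v_mult[of "-1" x] v_m1 by simp
qed simp

lemma v_inverse: "x \<noteq> 0 \<Longrightarrow> v (inverse x) = - v x"
  using v_mult[of x "inverse x"] by simp

lemma v_power: "x \<noteq> 0 \<Longrightarrow> v (x ^ k) = int k * v x"
  by (induction k) (simp_all add: v_mult algebra_simps)

lemma vge_add: "vge v n x \<Longrightarrow> vge v n y \<Longrightarrow> vge v n (x + y)"
  using v_add[of x y] by (cases "x = 0"; cases "y = 0"; cases "x + y = 0") (auto simp: vge_def)

lemma vge_uminus [simp]: "vge v n (- x) \<longleftrightarrow> vge v n x"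
  by (simp add: vge_def)

lemma vge_diff: "vge v n x \<Longrightarrow> vge v n y \<Longrightarrow> vge v n (x - y)"
  using vge_add[of n x "-y"] by simp

lemma vge_mult: "vge v n x \<Longrightarrow> vge v m y \<Longrightarrow> vge v (n + m) (x * y)"
  using v_mult[of x y] by (cases "x = 0"; cases "y = 0") (auto simp: vge_def)

lemma vge_sum: "(\<And>i. i \<in> A \<Longrightarrow> vge v n (f i)) \<Longrightarrow> vge v n (sum f A)"
  by (induction A rule: infinite_finite_induct) (auto intro: vge_add)

lemma vge_inverse: "vge v (- v x) (inverse x)"
  by (cases "x = 0") (simp_all add: vge_def v_inverse)

lemma vge_div: "q \<noteq> 0 \<Longrightarrow> q * z = y \<Longrightarrow> vge v n y \<Longrightarrow> vge v (n - v q) z"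
proof -
  assume q: "q \<noteq> 0" "q * z = y" "vge v n y"
  then have "z = inverse q * y" by (auto simp: field_simps)
  moreover have "vge v (- v q + n) (inverse q * y)" by (rule vge_mult[OF vge_inverse q(3)])
  ultimately show ?thesis by simp
qed

lemma vge_strict:
  assumes "x \<noteq> 0" "vge v (v x + 1) y"
  shows "x + y \<noteq> 0 \<and> v (x + y) = v x"
proof (cases "y = 0")
  case True then show ?thesis using assms by simp
next
  case False
  then have y: "v x + 1 \<le> v y" using assms by (simp add: vge_def)
  have nz: "x + y \<noteq> 0"
  proof
    assume "x + y = 0"
    then have "y = - x" by (metis add.commute add_eq_0_iff)
    then show False using y by simp
  qed
  have 1: "min (v x) (v y) \<le> v (x + y)" using v_add[OF assms(1) False nz] .
  have 2: "min (v (x + y)) (v (-y)) \<le> v x"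
    using v_add[OF nz, of "-y"] False assms(1) by simp
  show ?thesis using 1 2 y nz by auto
qed

lemma vge_all_zero: "(\<And>N. vge v N x) \<Longrightarrow> x = 0"
  by (metis vge_def add1_zle_eq order_less_irrefl)

end

lemma pCons_as: "pCons a (p::'a::field poly) = [:a:] + [:0, 1:] * p"
  by simp
lemma rf_pCons: "rf_of_poly (pCons a p) = rf_const a + rf_of_poly [:0,1:] * rf_of_poly p"
  by (subst pCons_as) (simp only: rf_add rf_mult rf_const_def)

context
  fixes v :: "'a::field poly fract \<Rightarrow> int"
  assumes pl: "place_trivial_on_F v"
begin

lemma dv: "discrete_valuation v" using pl by (simp add: place_trivial_on_F_def)
lemma v_const: "c \<noteq> 0 \<Longrightarrow> v (rf_const c) = 0" using pl by (simp add: place_trivial_on_F_def)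
lemma vge_const: "vge v 0 (rf_const c)" by (cases "c = 0") (simp_all add: vge_def v_const)

abbreviation "tt \<equiv> rf_of_poly [:0::'a, 1:]"

lemma tt_nz: "tt \<noteq> 0" by simp

lemma caseA_v:
  assumes neg: "v tt < 0"
  shows "p \<noteq> 0 \<Longrightarrow> v (rf_of_poly p) = int (degree p) * v tt"
proof (induction p rule: pCons_induct)
  case 0 then show ?case by simp
next
  case (pCons a p)
  show ?case
  proof (cases "p = 0")
    case True
    then have "a \<noteq> 0" using pCons by simp
    then show ?thesis using True v_const[of a] by (simp add: rf_const_def)
  next
    case False
    define x where "x = tt * rf_of_poly p"
    have x0: "x \<noteq> 0" using False by (simp add: x_def)
    have vx: "v x = int (Suc (degree p)) * v tt"
      using pCons.IH False by (simp add: x_def v_mult[OF dv] algebra_simps)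
    have "int (Suc (degree p)) * v tt \<le> 1 * v tt" using neg by (intro mult_right_mono_neg) auto
    then have "v x + 1 \<le> 0" using vx neg by linarith
    then have "vge v (v x + 1) (rf_const a)"
      using vge_mono[OF vge_const[of a]] by blast
    then have "v (x + rf_const a) = v x" using vge_strict[OF dv x0] by blast
    moreover have "rf_of_poly (pCons a p) = x + rf_const a" by (subst rf_pCons) (simp add: x_def add.commute)
    moreover have "degree (pCons a p) = Suc (degree p)" using False by simp
    ultimately show ?thesis using vx by metis
  qed
qed


lemma caseA_bound:
  assumes neg: "v tt < 0" and p: "p \<noteq> 0"
  shows "vge v (v (rf_of_poly p)) (rf_of_poly (hasse_poly j p))"
proof (cases "hasse_poly j p = 0")
  case False
  have d: "degree (hasse_poly j p) \<le> degree p" by (rule degree_hasse)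
  have le: "int (degree p) * v tt \<le> int (degree (hasse_poly j p)) * v tt"
    by (rule mult_right_mono_neg) (use d neg in simp_all)
  have "v (rf_of_poly (hasse_poly j p)) = int (degree (hasse_poly j p)) * v tt"
    by (rule caseA_v[OF neg False])
  moreover have "v (rf_of_poly p) = int (degree p) * v tt"
    by (rule caseA_v[OF neg p])
  ultimately show ?thesis using le False by (simp add: vge_def)
qed simp

lemma caseB_nonneg:
  assumes nn: "0 \<le> v tt"
  shows "vge v 0 (rf_of_poly p)"
proof (induction p rule: pCons_induct)
  case 0 then show ?case by simp
next
  case (pCons a p)
  have "vge v (0 + 0) (tt * rf_of_poly p)"
    using vge_mult[OF dv vge_mono[OF vge_self[of v tt] nn] pCons.IH] .
  then show ?case using vge_add[OF dv vge_const] by (subst rf_pCons) simp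
qed

lemma exists_pos:
  assumes nn: "0 \<le> v tt"
  shows "\<exists>p. p \<noteq> 0 \<and> 0 < v (rf_of_poly p)"
proof (rule ccontr)
  assume "\<not> ?thesis"
  then have z: "p \<noteq> 0 \<Longrightarrow> v (rf_of_poly p) = 0" for p
    using caseB_nonneg[OF nn, of p] by (force simp: vge_def)
  obtain x where x: "x \<noteq> 0" "v x = 1" using dv by (auto simp: discrete_valuation_def)
  obtain p q where pq: "x = Fract p q" "q \<noteq> 0" by (cases x)
  have "rf_of_poly q * x = rf_of_poly p" using rf_Fract pq by metis
  moreover have "p \<noteq> 0" using x pq by (auto simp: eq_fract Zero_fract_def)
  ultimately have "v (rf_of_poly q) + v x = v (rf_of_poly p)"
    using v_mult[OF dv, of "rf_of_poly q" x] x pq by simp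
  then show False using z[of p] z[of q] pq x \<open>p \<noteq> 0\<close> by simp
qed

lemma poly_bound:
  "\<exists>C\<ge>0. \<forall>j p. p \<noteq> 0 \<longrightarrow> vge v (v (rf_of_poly p) - int j * C) (rf_of_poly (hasse_poly j p))"
proof (cases "v tt < 0")
  case True
  then show ?thesis using caseA_bound by (intro exI[of _ 0]) auto
next
  case False
  then have nn: "0 \<le> v tt" by simp
  obtain P0 where "P0 \<noteq> 0 \<and> 0 < v (rf_of_poly P0)" using exists_pos[OF nn] by blast
  then obtain P where P: "P \<noteq> 0" "0 < v (rf_of_poly P)"
    and Pmin: "\<And>p. p \<noteq> 0 \<Longrightarrow> 0 < v (rf_of_poly p) \<Longrightarrow> degree P \<le> degree p"
    using ex_has_least_nat[of "\<lambda>p. p \<noteq> 0 \<and> 0 < v (rf_of_poly p)" P0 degree] by blast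
  define e where "e = v (rf_of_poly P)"
  have e: "0 < e" using P by (simp add: e_def)
  have vnn: "p \<noteq> 0 \<Longrightarrow> 0 \<le> v (rf_of_poly p)" for p using caseB_nonneg[OF nn, of p] by (simp add: vge_def)
  have factor: "\<exists>k u. p = P ^ k * u \<and> u \<noteq> 0 \<and> v (rf_of_poly u) = 0" if "p \<noteq> 0" for p
    using that
  proof (induction "nat (v (rf_of_poly p))" arbitrary: p rule: less_induct)
    case less
    show ?case
    proof (cases "v (rf_of_poly p) \<le> 0")
      case True
      then show ?thesis using vnn[OF less.prems] less.prems by (intro exI[of _ 0] exI[of _ p]) auto
    next
      case False
      define a where "a = p div P"
      define r where "r = p mod P"
      have pa: "p = P * a + r" by (simp add: a_def r_def mult.commute)
      have r0: "r = 0"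
      proof (rule ccontr)
        assume rnz: "r \<noteq> 0"
        then have dr: "degree r < degree P" using degree_mod_less[OF P(1), of p] by (simp add: r_def)
        have "rf_of_poly r = rf_of_poly p - rf_of_poly P * rf_of_poly a"
          using pa by (simp add: rf_add rf_mult)
        moreover have "vge v 1 (rf_of_poly p)" using False by (simp add: vge_def)
        moreover have "vge v (e + 0) (rf_of_poly P * rf_of_poly a)"
          using vge_mult[OF dv vge_self caseB_nonneg[OF nn]] by (simp add: e_def)
        moreover have "vge v 1 (rf_of_poly P * rf_of_poly a)"
          using calculation(3) vge_mono[of v e _ 1] e by simp
        ultimately have "vge v 1 (rf_of_poly r)"
          using vge_diff[OF dv] by simp
        then have "0 < v (rf_of_poly r)" using rnz by (simp add: vge_def)
        then show False using Pmin[OF rnz] dr by simp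
      qed
      have a0: "a \<noteq> 0" using pa r0 less.prems by auto
      have va: "v (rf_of_poly p) = e + v (rf_of_poly a)"
        using pa r0 a0 P by (simp add: rf_mult v_mult[OF dv] e_def)
      have "nat (v (rf_of_poly a)) < nat (v (rf_of_poly p))" using va e vnn[OF a0] by simp
      then obtain k u where "a = P ^ k * u" "u \<noteq> 0" "v (rf_of_poly u) = 0"
        using less.hyps[OF _ a0] by blast
      then show ?thesis using pa r0 by (intro exI[of _ "Suc k"] exI[of _ u]) auto
    qed
  qed
  have powb: "vge v ((int k - int j) * e) (rf_of_poly (hasse_poly j (P ^ k)))" for k j
  proof (induction k arbitrary: j)
    case 0
    have "(int 0 - int j) * e \<le> 0" using e by (simp add: mult_le_0_iff)
    then show ?case using caseB_nonneg[OF nn] vge_mono by (metis power_0)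
  next
    case (Suc k)
    have "rf_of_poly (hasse_poly j (P ^ Suc k)) =
          (\<Sum>i\<le>j. rf_of_poly (hasse_poly i P) * rf_of_poly (hasse_poly (j - i) (P ^ k)))"
      by (simp add: hasse_leibniz rf_sum rf_mult)
    also have "vge v ((int (Suc k) - int j) * e) \<dots>"
    proof (rule vge_sum[OF dv])
      fix i assume i: "i \<in> {..j}"
      show "vge v ((int (Suc k) - int j) * e) (rf_of_poly (hasse_poly i P) * rf_of_poly (hasse_poly (j - i) (P ^ k)))"
      proof (cases "i = 0")
        case True
        have "vge v (e + (int k - int j) * e) (rf_of_poly P * rf_of_poly (hasse_poly j (P ^ k)))"
          using vge_mult[OF dv vge_self Suc.IH] by (simp add: e_def)
        then show ?thesis using True by (simp add: algebra_simps)
      next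
        case False
        have le: "(int (Suc k) - int j) * e \<le> (int k - int (j - i)) * e"
          using False i e by (intro mult_right_mono) auto
        have "vge v (0 + (int k - int (j - i)) * e) (rf_of_poly (hasse_poly i P) * rf_of_poly (hasse_poly (j - i) (P ^ k)))"
          using vge_mult[OF dv caseB_nonneg[OF nn] Suc.IH] .
        then show ?thesis using le vge_mono by simp
      qed
    qed
    finally show ?case .
  qed
  show ?thesis
  proof (intro exI[of _ e] conjI allI impI)
    show "0 \<le> e" using e by simp
    fix j p assume p: "(p::'a poly) \<noteq> 0"
    obtain k u where ku: "p = P ^ k * u" "u \<noteq> 0" "v (rf_of_poly u) = 0" using factor[OF p] by blast
    have vp: "v (rf_of_poly p) = int k * e"
      using ku P by (simp add: rf_mult rf_power v_mult[OF dv] v_power[OF dv] e_def)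
    have "rf_of_poly (hasse_poly j p) =
          (\<Sum>i\<le>j. rf_of_poly (hasse_poly i (P ^ k)) * rf_of_poly (hasse_poly (j - i) u))"
      by (simp add: ku(1) hasse_leibniz rf_sum rf_mult)
    also have "vge v (v (rf_of_poly p) - int j * e) \<dots>"
    proof (rule vge_sum[OF dv])
      fix i assume i: "i \<in> {..j}"
      have le: "v (rf_of_poly p) - int j * e \<le> (int k - int i) * e + 0"
        using vp i e by (simp add: algebra_simps)
      show "vge v (v (rf_of_poly p) - int j * e) (rf_of_poly (hasse_poly i (P ^ k)) * rf_of_poly (hasse_poly (j - i) u))"
        using vge_mono[OF vge_mult[OF dv powb caseB_nonneg[OF nn]] le] .
    qed
    finally show "vge v (v (rf_of_poly p) - int j * e) (rf_of_poly (hasse_poly j p))" .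
  qed
qed

end

lemma frac_bound:
  fixes v :: "'a::field poly fract \<Rightarrow> int"
  assumes pl: "place_trivial_on_F v"
  shows "\<exists>C\<ge>0. \<forall>j x. x \<noteq> 0 \<longrightarrow> vge v (v x - int j * C) (hd j x)"
proof -
  have dv: "discrete_valuation v" using pl by (simp add: place_trivial_on_F_def)
  obtain C where C0: "0 \<le> C"
    and PB: "\<And>j p. p \<noteq> 0 \<Longrightarrow> vge v (v (rf_of_poly p) - int j * C) (rf_of_poly (hasse_poly j p))"
    using poly_bound[OF pl] by blast
  have HD: "higher_derivation (range rf_const) hd" by (rule hd_higher)
  have main: "\<forall>x. x \<noteq> 0 \<longrightarrow> vge v (v x - int j * C) (hd j x)" for j
  proof (induction j rule: less_induct)
    case (less j)
    show ?case
    proof (intro allI impI)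
      fix x :: "'a poly fract" assume x0: "x \<noteq> 0"
      obtain p q where pq: "x = Fract p q" "q \<noteq> 0" by (cases x)
      have p0: "p \<noteq> 0" using x0 pq by (auto simp: fract_collapse)
      have X: "rf_of_poly q * x = rf_of_poly p" using rf_Fract pq by metis
      have vpq: "v (rf_of_poly p) = v (rf_of_poly q) + v x"
        using X v_mult[OF dv, of "rf_of_poly q" x] x0 pq by simp
      show "vge v (v x - int j * C) (hd j x)"
      proof (cases j)
        case 0 then show ?thesis by (simp add: hd_def thf_0th vge_self)
      next
        case (Suc n)
        have "hd j (rf_of_poly p) = hd j (rf_of_poly q * x)" using X by simp
        also have "\<dots> = (\<Sum>k\<le>Suc n. hd k (rf_of_poly q) * hd (Suc n - k) x)"
          using HD Suc unfolding higher_derivation_def by blast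
        also have "\<dots> = hd 0 (rf_of_poly q) * hd (Suc n - 0) x +
              (\<Sum>i\<le>n. hd (Suc i) (rf_of_poly q) * hd (Suc n - Suc i) x)"
          by (rule sum.atMost_Suc_shift)
        finally have L: "hd j (rf_of_poly p) = rf_of_poly q * hd j x +
              (\<Sum>i\<le>n. hd (Suc i) (rf_of_poly q) * hd (j - Suc i) x)"
          using Suc by (simp add: hd_def thf_0th)
        have S: "vge v (v (rf_of_poly p) - int j * C) (\<Sum>i\<le>n. hd (Suc i) (rf_of_poly q) * hd (j - Suc i) x)"
        proof (rule vge_sum[OF dv])
          fix i assume i: "i \<in> {..n}"
          have a: "vge v (v (rf_of_poly q) - int (Suc i) * C) (hd (Suc i) (rf_of_poly q))"
            using PB[OF pq(2), of "Suc i"] by (simp only: hd_rf)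
          have b: "vge v (v x - int (j - Suc i) * C) (hd (j - Suc i) x)"
            using less.IH[of "j - Suc i"] Suc x0 by auto
          have e: "v (rf_of_poly q) - int (Suc i) * C + (v x - int (j - Suc i) * C) = v (rf_of_poly p) - int j * C"
            using i Suc vpq by (simp add: of_nat_diff algebra_simps)
          show "vge v (v (rf_of_poly p) - int j * C) (hd (Suc i) (rf_of_poly q) * hd (j - Suc i) x)"
            using vge_mult[OF dv a b] e by simp
        qed
        have R: "vge v (v (rf_of_poly p) - int j * C) (hd j (rf_of_poly p))"
          using PB[OF p0] by (simp add: hd_rf)
        have "rf_of_poly q * hd j x = hd j (rf_of_poly p) - (\<Sum>i\<le>n. hd (Suc i) (rf_of_poly q) * hd (j - Suc i) x)"
          using L by simp
        then have "vge v (v (rf_of_poly p) - int j * C - v (rf_of_poly q)) (hd j x)"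
          using vge_div[OF dv _ _ vge_diff[OF dv R S]] pq(2) by simp
        then show ?thesis using vpq by (simp add: algebra_simps)
      qed
    qed
  qed
  show ?thesis using main C0 by blast
qed

definition apx :: "('b::field \<Rightarrow> int) \<Rightarrow> ('a \<Rightarrow> 'b) \<Rightarrow> 'b \<Rightarrow> nat \<Rightarrow> 'a" where
  "apx w \<iota> y n = (SOME x. vge w (int n) (y - \<iota> x))"

definition extD :: "('b::field \<Rightarrow> int) \<Rightarrow> ('a \<Rightarrow> 'b) \<Rightarrow> (nat \<Rightarrow> 'a \<Rightarrow> 'a) \<Rightarrow> nat \<Rightarrow> 'b \<Rightarrow> 'b" where
  "extD w \<iota> d j y = (SOME l. vconverges w (\<lambda>n. \<iota> (d j (apx w \<iota> y n))) l)"

locale ext_setup =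
  fixes v :: "'a::field \<Rightarrow> int" and w :: "'b::field \<Rightarrow> int" and \<iota> :: "'a \<Rightarrow> 'b"
    and d :: "nat \<Rightarrow> 'a \<Rightarrow> 'a" and C :: int
  assumes dv: "discrete_valuation v" and comp: "is_completion v w \<iota>"
    and dadd: "\<And>j x y. d j (x + y) = d j x + d j y"
    and dleib: "\<And>j a b. d j (a * b) = (\<Sum>k\<le>j. d k a * d (j - k) b)"
    and C0: "0 \<le> C" and dbound: "\<And>j x. x \<noteq> 0 \<Longrightarrow> vge v (v x - int j * C) (d j x)"
begin

lemma dw: "discrete_valuation w" using comp by (simp add: is_completion_def)
lemma wcomplete: "vcomplete w" using comp by (simp add: is_completion_def)
lemma hom: "field_hom \<iota>" using comp by (simp add: is_completion_def)
lemma w_iota: "x \<noteq> 0 \<Longrightarrow> w (\<iota> x) = v x" using comp by (simp add: is_completion_def)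
lemma dense: "\<exists>x. vge w N (y - \<iota> x)" using comp by (simp add: is_completion_def vclose_iff)

lemma i_add: "\<iota> (x + y) = \<iota> x + \<iota> y" using hom by (simp add: field_hom_def)
lemma i_mult: "\<iota> (x * y) = \<iota> x * \<iota> y" using hom by (simp add: field_hom_def)
lemma i_1: "\<iota> 1 = 1" using hom by (simp add: field_hom_def)
lemma i_0: "\<iota> 0 = 0" using i_add[of 0 0] by (metis add.right_neutral add_left_cancel)
lemma i_uminus: "\<iota> (- x) = - \<iota> x" using i_add[of x "-x"] i_0 minus_unique[of "\<iota> x" "\<iota> (-x)"] by simp
lemma i_diff: "\<iota> (x - y) = \<iota> x - \<iota> y" using i_add[of x "-y"] i_uminus[of y] by simp
lemma i_sum: "\<iota> (sum f A) = (\<Sum>x\<in>A. \<iota> (f x))"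
  by (induction A rule: infinite_finite_induct) (auto simp: i_add i_0)
lemma i_nz: "x \<noteq> 0 \<Longrightarrow> \<iota> x \<noteq> 0"
  using i_mult[of x "inverse x"] i_1 by auto
lemma vge_i: "vge w n (\<iota> x) \<longleftrightarrow> vge v n x"
  by (cases "x = 0") (simp_all add: vge_def i_0 i_nz w_iota)

lemma d_zero: "d j 0 = 0" using dadd[of j 0 0] by (metis add.right_neutral add_left_cancel)
lemma d_uminus: "d j (- x) = - d j x" using dadd[of j x "-x"] d_zero minus_unique[of "d j x" "d j (-x)"] by simp
lemma d_diff: "d j (x - y) = d j x - d j y" using dadd[of j x "-y"] d_uminus[of j y] by simp

lemma d_vge: "vge v n x \<Longrightarrow> vge v (n - int j * C) (d j x)"
  by (cases "x = 0") (auto simp: d_zero vge_def dest: dbound[of _ j] intro: order_trans)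

lemma apx: "vge w (int n) (y - \<iota> (apx w \<iota> y n))"
  unfolding apx_def by (rule someI_ex) (rule dense)

lemma seq_cauchy: "vcauchy w (\<lambda>n. \<iota> (d j (apx w \<iota> y n)))"
  unfolding vcauchy_def
proof
  fix N
  define M where "M = nat (N + int j * C)"
  show "\<exists>M. \<forall>m n. M \<le> m \<longrightarrow> M \<le> n \<longrightarrow>
          vclose w N (\<iota> (d j (apx w \<iota> y m))) (\<iota> (d j (apx w \<iota> y n)))"
  proof (intro exI[of _ M] allI impI)
    fix m n assume mn: "M \<le> m" "M \<le> n"
    have a: "vge w (int M) (y - \<iota> (apx w \<iota> y m))" using vge_mono[OF apx[of m y], of "int M"] mn by simp
    have b: "vge w (int M) (y - \<iota> (apx w \<iota> y n))" using vge_mono[OF apx[of n y], of "int M"] mn by simp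
    have "vge w (int M) ((y - \<iota> (apx w \<iota> y n)) - (y - \<iota> (apx w \<iota> y m)))"
      using vge_diff[OF dw b a] .
    then have "vge v (int M) (apx w \<iota> y m - apx w \<iota> y n)" by (simp add: i_diff vge_i[symmetric])
    then have "vge v (int M - int j * C) (d j (apx w \<iota> y m) - d j (apx w \<iota> y n))"
      using d_vge d_diff by metis
    then have "vge v N (d j (apx w \<iota> y m) - d j (apx w \<iota> y n))"
      using vge_mono unfolding M_def by fastforce
    then show "vclose w N (\<iota> (d j (apx w \<iota> y m))) (\<iota> (d j (apx w \<iota> y n)))"
      by (simp add: vclose_iff i_diff[symmetric] vge_i)
  qed
qed

lemma extD_conv: "vconverges w (\<lambda>n. \<iota> (d j (apx w \<iota> y n))) (extD w \<iota> d j y)"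
  unfolding extD_def by (rule someI_ex) (use wcomplete seq_cauchy in \<open>auto simp: vcomplete_def\<close>)

definition approx :: "'b \<Rightarrow> 'b \<Rightarrow> ('a \<Rightarrow> 'a) \<Rightarrow> bool" where
  "approx y l g \<longleftrightarrow> (\<forall>N. \<exists>M. \<forall>x. vge w M (y - \<iota> x) \<longrightarrow> vge w N (l - \<iota> (g x)))"

lemma approx_unique:
  assumes "approx y l1 g" "approx y l2 g" shows "l1 = l2"
proof -
  have "vge w N (l1 - l2)" for N
  proof -
    obtain M1 where M1: "\<And>x. vge w M1 (y - \<iota> x) \<Longrightarrow> vge w N (l1 - \<iota> (g x))"
      using assms(1) unfolding approx_def by blast
    obtain M2 where M2: "\<And>x. vge w M2 (y - \<iota> x) \<Longrightarrow> vge w N (l2 - \<iota> (g x))"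
      using assms(2) unfolding approx_def by blast
    obtain x where x: "vge w (max M1 M2) (y - \<iota> x)" using dense by blast
    have "vge w N ((l1 - \<iota> (g x)) - (l2 - \<iota> (g x)))"
      using vge_diff[OF dw M1 M2] x vge_mono by (metis max.cobounded1 max.cobounded2)
    then show ?thesis by simp
  qed
  then show ?thesis using vge_all_zero[OF dw, of "l1 - l2"] by simp
qed

lemma extD_approx: "approx y (extD w \<iota> d j y) (d j)"
  unfolding approx_def
proof
  fix N
  obtain M0 where M0: "\<And>n. M0 \<le> n \<Longrightarrow> vge w N (\<iota> (d j (apx w \<iota> y n)) - extD w \<iota> d j y)"
    using extD_conv[of j y] unfolding vconverges_def vclose_iff by blast
  define M where "M = N + int j * C"
  define n where "n = max M0 (nat M)"
  show "\<exists>M. \<forall>x. vge w M (y - \<iota> x) \<longrightarrow> vge w N (extD w \<iota> d j y - \<iota> (d j x))"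
  proof (intro exI[of _ M] allI impI)
    fix x assume x: "vge w M (y - \<iota> x)"
    have a: "vge w M (y - \<iota> (apx w \<iota> y n))" using apx[of n y] vge_mono unfolding n_def by fastforce
    have "vge w M ((y - \<iota> x) - (y - \<iota> (apx w \<iota> y n)))" using vge_diff[OF dw x a] .
    then have "vge v M (apx w \<iota> y n - x)" by (simp add: i_diff vge_i[symmetric])
    then have "vge v (M - int j * C) (d j (apx w \<iota> y n) - d j x)" using d_vge d_diff by metis
    then have b: "vge w N (\<iota> (d j (apx w \<iota> y n)) - \<iota> (d j x))"
      by (simp add: M_def i_diff[symmetric] vge_i)
    have "vge w N ((\<iota> (d j (apx w \<iota> y n)) - \<iota> (d j x)) - (\<iota> (d j (apx w \<iota> y n)) - extD w \<iota> d j y))"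
      using vge_diff[OF dw b M0[of n]] n_def by simp
    then show "vge w N (extD w \<iota> d j y - \<iota> (d j x))" by simp
  qed
qed

lemma extD_char: "approx y l (d j) \<Longrightarrow> extD w \<iota> d j y = l"
  using approx_unique extD_approx by blast

lemma extD_iota: "extD w \<iota> d j (\<iota> x0) = \<iota> (d j x0)"
proof (rule extD_char)
  show "approx (\<iota> x0) (\<iota> (d j x0)) (d j)"
    unfolding approx_def
  proof
    fix N
    show "\<exists>M. \<forall>x. vge w M (\<iota> x0 - \<iota> x) \<longrightarrow> vge w N (\<iota> (d j x0) - \<iota> (d j x))"
    proof (intro exI[of _ "N + int j * C"] allI impI)
      fix x assume "vge w (N + int j * C) (\<iota> x0 - \<iota> x)"
      then have "vge v (N + int j * C) (x0 - x)" by (simp add: i_diff[symmetric] vge_i)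
      then have "vge v (N + int j * C - int j * C) (d j x0 - d j x)" using d_vge d_diff by metis
      then show "vge w N (\<iota> (d j x0) - \<iota> (d j x))" by (simp add: i_diff[symmetric] vge_i)
    qed
  qed
qed

lemma extD_add: "extD w \<iota> d j (y1 + y2) = extD w \<iota> d j y1 + extD w \<iota> d j y2"
proof (rule extD_char)
  show "approx (y1 + y2) (extD w \<iota> d j y1 + extD w \<iota> d j y2) (d j)"
    unfolding approx_def
  proof
    fix N
    obtain M1 where M1: "\<And>x. vge w M1 (y1 - \<iota> x) \<Longrightarrow> vge w N (extD w \<iota> d j y1 - \<iota> (d j x))"
      using extD_approx[of y1 j] unfolding approx_def by blast
    obtain M2 where M2: "\<And>x. vge w M2 (y2 - \<iota> x) \<Longrightarrow> vge w N (extD w \<iota> d j y2 - \<iota> (d j x))"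
      using extD_approx[of y2 j] unfolding approx_def by blast
    show "\<exists>M. \<forall>x. vge w M (y1 + y2 - \<iota> x) \<longrightarrow>
            vge w N (extD w \<iota> d j y1 + extD w \<iota> d j y2 - \<iota> (d j x))"
    proof (intro exI[of _ "max M1 M2"] allI impI)
      fix x assume x: "vge w (max M1 M2) (y1 + y2 - \<iota> x)"
      obtain x1 where x1: "vge w (max M1 M2) (y1 - \<iota> x1)" using dense by blast
      have "vge w (max M1 M2) ((y1 + y2 - \<iota> x) - (y1 - \<iota> x1))" using vge_diff[OF dw x x1] .
      then have x2: "vge w (max M1 M2) (y2 - \<iota> (x - x1))" by (simp add: i_diff algebra_simps)
      have a: "vge w N (extD w \<iota> d j y1 - \<iota> (d j x1))" using M1 x1 vge_mono by (metis max.cobounded1)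
      have b: "vge w N (extD w \<iota> d j y2 - \<iota> (d j (x - x1)))" using M2 x2 vge_mono by (metis max.cobounded2)
      have "vge w N ((extD w \<iota> d j y1 - \<iota> (d j x1)) + (extD w \<iota> d j y2 - \<iota> (d j (x - x1))))"
        using vge_add[OF dw a b] .
      then show "vge w N (extD w \<iota> d j y1 + extD w \<iota> d j y2 - \<iota> (d j x))"
        by (simp add: d_diff i_diff algebra_simps)
    qed
  qed
qed

lemma extD_zero: "extD w \<iota> d j 0 = 0"
  using extD_iota[of j 0] by (simp add: i_0 d_zero)

lemma extD_diff: "extD w \<iota> d j (a - b) = extD w \<iota> d j a - extD w \<iota> d j b"
  using extD_add[of j "a - b" b] by simp

lemma extD_vge: "vge w n y \<Longrightarrow> vge w (n - int j * C) (extD w \<iota> d j y)"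
proof -
  assume y: "vge w n y"
  obtain M where M: "\<And>x. vge w M (y - \<iota> x) \<Longrightarrow> vge w (n - int j * C) (extD w \<iota> d j y - \<iota> (d j x))"
    using extD_approx[of y j] unfolding approx_def by blast
  obtain x where x: "vge w (max M n) (y - \<iota> x)" using dense by blast
  have "vge w n (y - (y - \<iota> x))" using vge_diff[OF dw y vge_mono[OF x]] by simp
  then have "vge v n x" by (simp add: vge_i)
  then have a: "vge w (n - int j * C) (\<iota> (d j x))" using d_vge vge_i by blast
  have b: "vge w (n - int j * C) (extD w \<iota> d j y - \<iota> (d j x))" using M x vge_mono by (metis max.cobounded1)
  show ?thesis using vge_add[OF dw a b] by simp
qed

lemma extD_cont: "vcontinuous w (extD w \<iota> d j)"
  unfolding vcontinuous_def
proof (intro allI)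
  fix x N
  show "\<exists>M. \<forall>y. vclose w M y x \<longrightarrow> vclose w N (extD w \<iota> d j y) (extD w \<iota> d j x)"
  proof (intro exI[of _ "N + int j * C"] allI impI)
    fix y assume "vclose w (N + int j * C) y x"
    then have "vge w (N + int j * C - int j * C) (extD w \<iota> d j (y - x))"
      using extD_vge[of "N + int j * C" "y - x" j] by (simp add: vclose_iff)
    then show "vclose w N (extD w \<iota> d j y) (extD w \<iota> d j x)" by (simp add: vclose_iff extD_diff)
  qed
qed

lemma extD_0th: "d 0 = id \<Longrightarrow> extD w \<iota> d 0 y = y"
  by (rule extD_char) (auto simp: approx_def)

end

context ext_setup begin

lemma extD_leibniz:
  "extD w \<iota> d j (y1 * y2) = (\<Sum>k\<le>j. extD w \<iota> d k y1 * extD w \<iota> d (j - k) y2)"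
proof -
  let ?D = "extD w \<iota> d"
  define L where "L = ?D j (y1 * y2)"
  define R where "R = (\<Sum>k\<le>j. ?D k y1 * ?D (j - k) y2)"
  have "vge w N (L - R)" for N
  proof -
    define A1 where "A1 = (if y1 = 0 then 0 else w y1)"
    define A2 where "A2 = (if y2 = 0 then 0 else w y2)"
    have y1A: "vge w A1 y1" by (simp add: A1_def vge_def)
    have y2A: "vge w A2 y2" by (simp add: A2_def vge_def)
    define jC where "jC = int j * C"
    have jC0: "0 \<le> jC" using C0 by (simp add: jC_def)
    define M where "M = \<bar>N\<bar> + 2 * jC + \<bar>A1\<bar> + \<bar>A2\<bar>"
    have ab: "A1 \<le> \<bar>A1\<bar>" "A2 \<le> \<bar>A2\<bar>" "N \<le> \<bar>N\<bar>" "0 \<le> \<bar>A1\<bar>" "0 \<le> \<bar>A2\<bar>" "0 \<le> \<bar>N\<bar>"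
      "- A1 \<le> \<bar>A1\<bar>" "- A2 \<le> \<bar>A2\<bar>"
      by auto
    have MA: "A1 \<le> M" "A2 \<le> M" using ab jC0 by (simp_all add: M_def)
    have MN1: "N + jC \<le> A1 + M" "N + jC \<le> M + A2" using ab jC0 by (simp_all add: M_def)
    have MN2: "N \<le> A1 - jC + (M - jC)" "N \<le> M - jC + (A2 - jC)" using ab jC0 by (simp_all add: M_def)
    obtain x1 where x1: "vge w M (y1 - \<iota> x1)" using dense by blast
    obtain x2 where x2: "vge w M (y2 - \<iota> x2)" using dense by blast
    have i1: "vge w A1 (\<iota> x1)"
      using vge_diff[OF dw y1A vge_mono[OF x1 MA(1)]] by simp
    have i2: "vge w A2 (\<iota> x2)"
      using vge_diff[OF dw y2A vge_mono[OF x2 MA(2)]] by simp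
    have E: "y1 * y2 - \<iota> (x1 * x2) = y1 * (y2 - \<iota> x2) + (y1 - \<iota> x1) * \<iota> x2"
      by (simp add: i_mult algebra_simps)
    have E1: "vge w (N + jC) (y1 * y2 - \<iota> (x1 * x2))"
      unfolding E
      by (rule vge_add[OF dw vge_mono[OF vge_mult[OF dw y1A x2] MN1(1)] vge_mono[OF vge_mult[OF dw x1 i2] MN1(2)]])
    have P1: "vge w N (L - ?D j (\<iota> (x1 * x2)))"
      using extD_vge[OF E1, of j] by (simp add: L_def extD_diff jC_def)
    have P2: "?D j (\<iota> (x1 * x2)) = (\<Sum>k\<le>j. ?D k (\<iota> x1) * ?D (j - k) (\<iota> x2))"
      by (subst extD_iota) (simp add: extD_iota dleib i_sum i_mult)
    have P3: "vge w N (R - ?D j (\<iota> (x1 * x2)))"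
    proof -
      have "R - ?D j (\<iota> (x1 * x2)) = (\<Sum>k\<le>j. ?D k y1 * ?D (j - k) y2 - ?D k (\<iota> x1) * ?D (j - k) (\<iota> x2))"
        by (simp add: R_def P2 sum_subtractf)
      also have "vge w N \<dots>"
      proof (rule vge_sum[OF dw])
        fix k assume k: "k \<in> {..j}"
        have kC: "int k * C \<le> jC" "int (j - k) * C \<le> jC"
          using k C0 by (auto simp: jC_def intro!: mult_right_mono)
        have T: "?D k y1 * ?D (j - k) y2 - ?D k (\<iota> x1) * ?D (j - k) (\<iota> x2) =
                 ?D k y1 * ?D (j - k) (y2 - \<iota> x2) + ?D k (y1 - \<iota> x1) * ?D (j - k) (\<iota> x2)"
          by (simp add: extD_diff algebra_simps)
        have a: "vge w (A1 - jC) (?D k y1)" using vge_mono[OF extD_vge[OF y1A, of k]] kC by simp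
        have b: "vge w (M - jC) (?D (j - k) (y2 - \<iota> x2))" using vge_mono[OF extD_vge[OF x2, of "j - k"]] kC by simp
        have c: "vge w (M - jC) (?D k (y1 - \<iota> x1))" using vge_mono[OF extD_vge[OF x1, of k]] kC by simp
        have e: "vge w (A2 - jC) (?D (j - k) (\<iota> x2))" using vge_mono[OF extD_vge[OF i2, of "j - k"]] kC by simp
        show "vge w N (?D k y1 * ?D (j - k) y2 - ?D k (\<iota> x1) * ?D (j - k) (\<iota> x2))"
          unfolding T
          by (rule vge_add[OF dw vge_mono[OF vge_mult[OF dw a b] MN2(1)] vge_mono[OF vge_mult[OF dw c e] MN2(2)]])
      qed
      finally show ?thesis .
    qed
    have "vge w N ((L - ?D j (\<iota> (x1 * x2))) - (R - ?D j (\<iota> (x1 * x2))))"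
      by (rule vge_diff[OF dw P1 P3])
    then show ?thesis by simp
  qed
  then have "L - R = 0" by (rule vge_all_zero[OF dw])
  then show ?thesis by (simp add: L_def R_def)
qed

end

definition evP :: "('a::field \<Rightarrow> 'b::field) \<Rightarrow> 'a poly \<Rightarrow> 'b \<Rightarrow> 'b" where
  "evP h f z = poly (map_poly h f) z"

locale hom_setup =
  fixes h :: "'a::field \<Rightarrow> 'b::field"
  assumes h_add: "\<And>x y. h (x + y) = h x + h y" and h_mult: "\<And>x y. h (x * y) = h x * h y"
    and h_1: "h 1 = 1"
begin

lemma h_0: "h 0 = 0" using h_add[of 0 0] by (metis add.right_neutral add_left_cancel)
lemma ev_pCons: "evP h (pCons a f) z = h a + z * evP h f z" by (simp add: evP_def map_poly_pCons h_0)
lemma ev_0: "evP h 0 z = 0" by (simp add: evP_def)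

lemma ev_add: "evP h (f + g) z = evP h f z + evP h g z"
proof (induction f arbitrary: g rule: pCons_induct)
  case 0 then show ?case by (simp add: ev_0)
next
  case (pCons a f)
  show ?case
  proof (cases g rule: pCons_cases)
    case (pCons b g')
    then show ?thesis using pCons.IH[of g'] by (simp add: ev_pCons h_add distrib_left add_ac)
  qed
qed

lemma ev_smult: "evP h (smult a f) z = h a * evP h f z"
  by (induction f rule: pCons_induct) (simp_all add: ev_0 ev_pCons h_mult algebra_simps)

lemma ev_mult: "evP h (f * g) z = evP h f z * evP h g z"
  by (induction f rule: pCons_induct) (simp_all add: ev_0 ev_pCons ev_add ev_smult h_0 algebra_simps)

lemma ev_1: "evP h 1 z = 1" by (simp add: evP_def map_poly_1 h_1)

end

lemma coprime_bezout:
  fixes a b :: "'a::field poly"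
  assumes cop: "coprime a b"
  shows "\<exists>x y. x * a + y * b = 1"
proof -
  define I where "I = {p. \<exists>x y. p = x * a + y * b}"
  have aI: "a \<in> I" unfolding I_def by (rule CollectI, rule exI[of _ 1], rule exI[of _ 0]) simp
  have bI: "b \<in> I" unfolding I_def by (rule CollectI, rule exI[of _ 0], rule exI[of _ 1]) simp
  have ne: "a \<noteq> 0 \<or> b \<noteq> 0"
  proof (rule ccontr)
    assume "\<not> (a \<noteq> 0 \<or> b \<noteq> 0)"
    then have "a = 0" "b = 0" by auto
    then show False using cop by simp
  qed
  then obtain p0 where p0: "p0 \<in> I \<and> p0 \<noteq> 0" using aI bI by blast
  obtain g where g: "g \<in> I \<and> g \<noteq> 0" and gmin: "\<And>p. p \<in> I \<and> p \<noteq> 0 \<Longrightarrow> degree g \<le> degree p"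
    using ex_has_least_nat[of "\<lambda>p. p \<in> I \<and> p \<noteq> 0" p0 degree] p0 by blast
  obtain xg yg where gxy: "g = xg * a + yg * b" using g unfolding I_def by blast
  have dvd: "g dvd p" if p: "p \<in> I" for p
  proof -
    obtain xp yp where pxy: "p = xp * a + yp * b" using p unfolding I_def by blast
    have "p mod g = (xp - (p div g) * xg) * a + (yp - (p div g) * yg) * b"
      using div_mult_mod_eq[of p g] pxy gxy by (simp add: algebra_simps)
    then have mI: "p mod g \<in> I" unfolding I_def by blast
    show ?thesis
    proof (rule ccontr)
      assume "\<not> g dvd p"
      then have m0: "p mod g \<noteq> 0" by (simp add: dvd_eq_mod_eq_0)
      then have "degree (p mod g) < degree g" using degree_mod_less'[of g p] g by simp
      then show False using gmin[of "p mod g"] mI m0 by simp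
    qed
  qed
  have "is_unit g" using cop dvd[OF aI] dvd[OF bI] by (rule coprime_common_divisor)
  then obtain k where k: "1 = g * k" by (auto elim!: dvdE)
  have "(k * xg) * a + (k * yg) * b = 1" using k gxy by (simp add: algebra_simps)
  then show ?thesis by blast
qed

theorem theorem4p3:
  fixes v :: "'a::field poly fract \<Rightarrow> int"
    and w :: "'e::field \<Rightarrow> int"
    and \<iota> :: "'a poly fract \<Rightarrow> 'e"
  assumes "place_trivial_on_F v"
    and "residue_separable v"
    and "is_completion v w \<iota>"
  shows "\<exists>D :: nat \<Rightarrow> 'e \<Rightarrow> 'e.
           (\<forall>j. vcontinuous w (D j)) \<and>
           (\<forall>j x. D j (\<iota> x) = \<iota> (hasse_rf j x)) \<and>
           (\<forall>K. coefficient_field w K \<and> \<iota> ` range rf_const \<subseteq> K \<longrightarrow> higher_derivation K D)"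
proof -
  note pl = assms(1) and rs = assms(2) and comp = assms(3)
  have dv: "discrete_valuation v" using pl by (simp add: place_trivial_on_F_def)
  obtain C where C0: "0 \<le> C" and CB: "\<And>j x. x \<noteq> 0 \<Longrightarrow> vge v (v x - int j * C) (hd j x)"
    using frac_bound[OF pl] by blast
  have HD: "higher_derivation (range rf_const) hd" by (rule hd_higher)
  have hd0: "hd 0 = id" using HD unfolding higher_derivation_def by blast
  have hadd: "\<And>j x y. hd j (x + y) = hd j x + hd j y" using HD unfolding higher_derivation_def by blast
  have hleib: "\<And>j a b. hd j (a * b) = (\<Sum>k\<le>j. hd k a * hd (j - k) b)"
    using HD unfolding higher_derivation_def by blast
  interpret E: ext_setup v w \<iota> hd C
    by unfold_locales (use dv comp hadd hleib C0 CB in auto)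
  have dw: "discrete_valuation w" by (rule E.dw)
  define D where "D = extD w \<iota> hd"
  show ?thesis
  proof (intro exI[of _ D] conjI allI impI)
    fix j show "vcontinuous w (D j)" by (simp add: D_def E.extD_cont)
  next
    fix j x show "D j (\<iota> x) = \<iota> (hasse_rf j x)" by (simp add: D_def E.extD_iota hasse_rf_eq)
  next
    fix K assume K: "coefficient_field w K \<and> \<iota> ` range rf_const \<subseteq> K"
    have sub: "subfield K" and Kval: "\<And>x. x \<in> K \<Longrightarrow> in_valring w x"
      and Kinj: "\<And>a b. a \<in> K \<Longrightarrow> b \<in> K \<Longrightarrow> in_maxideal w (a - b) \<Longrightarrow> a = b"
      using K by (auto simp: coefficient_field_def)
    have K0: "0 \<in> K" and Kadd: "\<And>x y. x \<in> K \<Longrightarrow> y \<in> K \<Longrightarrow> x + y \<in> K"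
      and Kmult: "\<And>x y. x \<in> K \<Longrightarrow> y \<in> K \<Longrightarrow> x * y \<in> K"
      using sub by (auto simp: subfield_def)
    define h where "h = (\<lambda>a. \<iota> (rf_const a))"
    have hK: "h a \<in> K" for a using K by (auto simp: h_def)
    interpret H: hom_setup h
      by unfold_locales (simp_all add: h_def rf_const_add rf_const_mult E.i_add E.i_mult E.i_1)
    have D0: "D 0 = id" by (rule ext) (simp add: D_def E.extD_0th hd0)
    have Dadd: "D k (a + b) = D k a + D k b" for k a b by (simp add: D_def E.extD_add)
    have Dleib: "D j (a * b) = (\<Sum>k\<le>j. D k a * D (j - k) b)" for j a b
      by (simp add: D_def E.extD_leibniz)
    have Dzero: "D k 0 = 0" for k by (simp add: D_def E.extD_zero)
    have Dh: "D k (h a) = 0" if "0 < k" for k a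
      using that by (simp add: D_def h_def E.extD_iota rf_const_def hd_rf hasse_const E.i_0)
    have Dspecial: "D k (c * z) = c * D k z + D k c * z"
      if k: "0 < k" and hyp: "\<forall>m. 0 < m \<and> m < k \<longrightarrow> D m c = 0" for k c z
    proof -
      have "D k (c * z) = (\<Sum>m\<le>k. D m c * D (k - m) z)" by (rule Dleib)
      also have "\<dots> = (\<Sum>m\<le>k. (if m = 0 then c * D k z else 0) + (if m = k then D k c * z else 0))"
      proof (rule sum.cong[OF refl])
        fix m assume m: "m \<in> {..k}"
        show "D m c * D (k - m) z = (if m = 0 then c * D k z else 0) + (if m = k then D k c * z else 0)"
          using m k hyp D0 by auto
      qed
      also have "\<dots> = c * D k z + D k c * z" by (simp add: sum.distrib)
      finally show ?thesis .
    qed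
    have Dev: "D k (evP h f c) = evP h (pderiv f) c * D k c"
      if k: "0 < k" and hyp: "\<forall>m. 0 < m \<and> m < k \<longrightarrow> D m c = 0" for k c f
    proof (induction f rule: pCons_induct)
      case 0 then show ?case by (simp add: H.ev_0 Dzero)
    next
      case (pCons a f)
      have "D k (evP h (pCons a f) c) = D k (h a) + D k (c * evP h f c)" by (simp add: H.ev_pCons Dadd)
      also have "\<dots> = c * D k (evP h f c) + D k c * evP h f c" using Dh[OF k] Dspecial[OF k hyp] by simp
      also have "\<dots> = evP h (pderiv (pCons a f)) c * D k c"
        using pCons.IH by (simp add: pderiv_pCons H.ev_add H.ev_pCons H.h_0 algebra_simps)
      finally show ?case .
    qed
    have hv: "vge w 0 (h a)" for a
      using vge_const[OF pl, of a] by (simp add: h_def E.vge_i)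
    have ev_vge0: "vge w 0 z \<Longrightarrow> vge w 0 (evP h f z)" for z f
    proof (induction f rule: pCons_induct)
      case 0 then show ?case by (simp add: H.ev_0)
    next
      case (pCons a f)
      have "vge w (0 + 0) (z * evP h f z)" by (rule vge_mult[OF dw pCons.prems pCons.IH[OF pCons.prems]])
      then show ?case using vge_add[OF dw hv] by (simp add: H.ev_pCons)
    qed
    have ev_close: "vge w 1 (evP h f z1 - evP h f z2)"
      if z: "vge w 0 z1" "vge w 0 z2" "vge w 1 (z1 - z2)" for z1 z2 f
    proof (induction f rule: pCons_induct)
      case 0 then show ?case by (simp add: H.ev_0)
    next
      case (pCons a f)
      have e: "evP h (pCons a f) z1 - evP h (pCons a f) z2 =
               z1 * (evP h f z1 - evP h f z2) + (z1 - z2) * evP h f z2"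
        by (simp add: H.ev_pCons algebra_simps)
      have a: "vge w (0 + 1) (z1 * (evP h f z1 - evP h f z2))" by (rule vge_mult[OF dw z(1) pCons.IH])
      have b: "vge w (1 + 0) ((z1 - z2) * evP h f z2)" by (rule vge_mult[OF dw z(3) ev_vge0[OF z(2)]])
      show ?case unfolding e using vge_add[OF dw, of 1] a b by simp
    qed
    have ev_iota: "\<iota> (poly (map_poly rf_const f) x) = evP h f (\<iota> x)" for f x
    proof (induction f rule: pCons_induct)
      case 0 then show ?case by (simp add: H.ev_0 E.i_0)
    next
      case (pCons a f)
      have hh: "\<iota> (rf_const a) = h a" by (simp add: h_def)
      show ?case using pCons.IH by (simp add: map_poly_pCons H.ev_pCons E.i_add E.i_mult hh)
    qed
    have ev_K: "z \<in> K \<Longrightarrow> evP h f z \<in> K" for z f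
    proof (induction f rule: pCons_induct)
      case 0 then show ?case by (simp add: H.ev_0 K0)
    next
      case (pCons a f)
      then show ?case by (simp add: H.ev_pCons Kadd Kmult hK)
    qed
    have root: "\<exists>f. separable_poly f \<and> evP h f c = 0" if c: "c \<in> K" for c
    proof -
      have c0: "vge w 0 c" using Kval[OF c] by (simp add: in_valring_iff)
      obtain x where x: "vge w 1 (c - \<iota> x)" using E.dense by blast
      have "vge w 0 (c - (c - \<iota> x))" using vge_diff[OF dw c0 vge_mono[OF x]] by simp
      then have ix: "vge w 0 (\<iota> x)" by simp
      then have "in_valring v x" by (simp add: in_valring_iff E.vge_i)
      then obtain f where f: "separable_poly f" "in_maxideal v (poly (map_poly rf_const f) x)"
        using rs by (auto simp: residue_separable_def)
      have f1: "vge w 1 (evP h f (\<iota> x))"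
        using f(2) by (simp add: in_maxideal_iff E.vge_i[symmetric] ev_iota)
      have f2: "vge w 1 (evP h f c - evP h f (\<iota> x))" by (rule ev_close[OF c0 ix x])
      have "vge w 1 (evP h f (\<iota> x) + (evP h f c - evP h f (\<iota> x)))" by (rule vge_add[OF dw f1 f2])
      then have "in_maxideal w (evP h f c - 0)" by (simp add: in_maxideal_iff)
      then have "evP h f c = 0" using Kinj[OF ev_K[OF c] K0] by blast
      then show ?thesis using f(1) by blast
    qed
    have const0: "D k c = 0" if c: "c \<in> K" and k: "0 < k" for c k
    proof -
      obtain f where f: "separable_poly f" "evP h f c = 0" using root[OF c] by blast
      obtain a b where ab: "a * f + b * pderiv f = 1"
        using coprime_bezout f(1) unfolding separable_poly_def by blast
      have "evP h (a * f + b * pderiv f) c = 1" using ab H.ev_1 by simp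
      then have "evP h b c * evP h (pderiv f) c = 1" using f(2) by (simp add: H.ev_add H.ev_mult)
      then have nz: "evP h (pderiv f) c \<noteq> 0" by auto
      have "\<forall>k. 0 < k \<longrightarrow> k \<le> n \<longrightarrow> D k c = 0" for n
      proof (induction n)
        case 0 then show ?case by simp
      next
        case (Suc n)
        show ?case
        proof (intro allI impI)
          fix k assume k: "0 < k" "k \<le> Suc n"
          show "D k c = 0"
          proof (cases "k \<le> n")
            case True then show ?thesis using Suc.IH k by blast
          next
            case False
            then have hyp: "\<forall>m. 0 < m \<and> m < k \<longrightarrow> D m c = 0" using Suc.IH k by auto
            have "0 = D k (evP h f c)" using f(2) Dzero by simp
            also have "\<dots> = evP h (pderiv f) c * D k c" by (rule Dev[OF k(1) hyp])
            finally show ?thesis using nz by simp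
          qed
        qed
      qed
      then show ?thesis using k by blast
    qed
    show "higher_derivation K D"
      unfolding higher_derivation_def
    proof (intro conjI allI impI)
      show "D 0 = id" by (rule D0)
    next
      fix j x y show "D j (x + y) = D j x + D j y" by (rule Dadd)
    next
      fix j r x assume r: "r \<in> K"
      have "D j (r * x) = (\<Sum>k\<le>j. D k r * D (j - k) x)" by (rule Dleib)
      also have "\<dots> = (\<Sum>k\<le>j. if k = 0 then r * D j x else 0)"
        by (rule sum.cong[OF refl]) (use const0[OF r] D0 in auto)
      also have "\<dots> = r * D j x" by simp
      finally show "D j (r * x) = r * D j x" .
    next
      fix j a b show "D j (a * b) = (\<Sum>k\<le>j. D k a * D (j - k) b)" by (rule Dleib)
    qed
  qed
qed

end
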